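(* Let $u\in\mathrm{BMO}(\mathbb R)$ be complex-valued and let $\varphi:\mathbb R\to\mathbb C$ satisfy $|\varphi(x)|\le Ce^{-|x|}$ for some $C>0$. If $\|u\|_*<C_{JN}$, then there is a constant $C(u)$, given in terms of $\|u\|_*$ (and $C$), such that for all $x\in\mathbb R$, $y>0$, $$\int_{\mathbb R}|\varphi_y(x-t)|\,e^{|u(t)-u_{I(x,y)}|}\,dt\le C(u).$$
   Context: $u_I=|I|^{-1}\int_Iu$, $\|u\|_*=\sup_I|I|^{-1}\int_I|u-u_I|$ over bounded intervals, $\mathrm{BMO}(\mathbb R)=\{\|u\|_*<\infty\}$. $C_0,C_{JN}>0$ are universal constants with $|I|^{-1}|\{t\in I:|u(t)-u_I|\ge\lambda\}|\le C_0\exp(-C_{JN}\lambda/\|u\|_* )$ for all $u\in\mathrm{BMO}$, bounded $I$, $\lambda>0$. $\varphi_y(x)=y^{-1}\varphi(x/y)$, $I(x,y)=(x-y,x+y)$. *)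

theory Defs
  imports "HOL-Analysis.Analysis"
begin

definition avg :: "(real \<Rightarrow> complex) \<Rightarrow> real \<Rightarrow> real \<Rightarrow> complex" where
  "avg u a b = (LINT t:{a<..<b}|lborel. u t) / complex_of_real (b - a)"

definition osc :: "(real \<Rightarrow> complex) \<Rightarrow> real \<Rightarrow> real \<Rightarrow> real" where
  "osc u a b = (LINT t:{a<..<b}|lborel. cmod (u t - avg u a b)) / (b - a)"

definition bmo :: "(real \<Rightarrow> complex) \<Rightarrow> bool" where
  "bmo u \<longleftrightarrow> (\<forall>a b. a < b \<longrightarrow> set_integrable lborel {a<..<b} u)
     \<and> bdd_above {osc u a b | a b. a < b}"

definition bmo_norm :: "(real \<Rightarrow> complex) \<Rightarrow> real" where
  "bmo_norm u = (SUP p\<in>{p. fst p < snd p}. osc u (fst p) (snd p))"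

end

theory Submission
  imports Defs
begin

lemma osc_le_norm:
  assumes "bmo u" "a < b" shows "osc u a b \<le> bmo_norm u"
proof -
  have "bdd_above {osc u a b | a b. a < b}" using assms(1) by (simp add: bmo_def)
  moreover have "{osc u a b | a b. a < b} = (\<lambda>p. osc u (fst p) (snd p)) ` {p. fst p < snd p}"
    by (auto simp: image_def)
  ultimately have "bdd_above ((\<lambda>p. osc u (fst p) (snd p)) ` {p. fst p < snd p})" by simp
  then show ?thesis unfolding bmo_norm_def
    using cSUP_upper[of "(a,b)" "{p. fst p < snd p}" "\<lambda>p. osc u (fst p) (snd p)"] assms(2) by simp
qed

lemma osc_nonneg: "a < b \<Longrightarrow> osc u a b \<ge> 0"
  unfolding osc_def set_lebesgue_integral_def
  by (intro divide_nonneg_nonneg integral_nonneg) auto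

lemma norm_nonneg_bmo: assumes "bmo u" shows "bmo_norm u \<ge> 0"
  using osc_le_norm[OF assms, of 0 1] osc_nonneg[of 0 1 u] by simp

lemma set_int_const: "set_integrable lborel {a<..<(b::real)} (\<lambda>_. c::complex)"
  unfolding set_integrable_def
  by (cases "a \<le> b") (auto intro!: integrable_scaleR_left integrable_real_indicator simp: emeasure_lborel_Ioo)

lemma set_int_cmod:
  assumes "bmo u" "a < b"
  shows "set_integrable lborel {a<..<b} (\<lambda>t. cmod (u t - c))"
proof -
  have "set_integrable lborel {a<..<b} u" using assms by (simp add: bmo_def)
  then have "set_integrable lborel {a<..<b} (\<lambda>t. u t - c)"
    using set_int_const by (rule set_integral_diff)
  then show ?thesis by (rule set_integrable_norm)
qed

lemma int_osc:
  assumes "a < b"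
  shows "(LINT t:{a<..<b}|lborel. cmod (u t - avg u a b)) = osc u a b * (b - a)"
  using assms unfolding osc_def by simp

lemma avg_sub:
  assumes "bmo u" "a' < b'"
  shows "avg u a' b' - c = (LINT t:{a'<..<b'}|lborel. u t - c) / complex_of_real (b' - a')"
proof -
  have iu: "set_integrable lborel {a'<..<b'} u" using assms by (simp add: bmo_def)
  have "(LINT t:{a'<..<b'}|lborel. u t - c) = (LINT t:{a'<..<b'}|lborel. u t) - (LINT t:{a'<..<b'}|lborel. c)"
    using set_integral_diff(2)[OF iu set_int_const] .
  also have "(LINT t:{a'<..<b'}|lborel. c) = (b' - a') *\<^sub>R c"
    using assms(2) by (subst set_integral_const) (auto simp: emeasure_lborel_Ioo measure_lborel_Ioo)
  finally show ?thesis using assms(2) unfolding avg_def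
    by (simp add: field_simps scaleR_conv_of_real)
qed

lemma int_mono_subset:
  assumes "bmo u" "a \<le> a'" "a' < b'" "b' \<le> b"
  shows "(LINT t:{a'<..<b'}|lborel. cmod (u t - c)) \<le> (LINT t:{a<..<b}|lborel. cmod (u t - c))"
proof -
  have i1: "set_integrable lborel {a'<..<b'} (\<lambda>t. cmod (u t - c))" by (rule set_int_cmod) (use assms in auto)
  have i2: "set_integrable lborel {a<..<b} (\<lambda>t. cmod (u t - c))" by (rule set_int_cmod) (use assms in auto)
  show ?thesis unfolding set_lebesgue_integral_def
    using i1 i2 assms unfolding set_integrable_def
    by (intro integral_mono) (auto split: split_indicator)
qed

lemma avg_diff:
  assumes "bmo u" "a \<le> a'" "a' < b'" "b' \<le> b" "b - a \<le> 2 * (b' - a')"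
  shows "cmod (avg u a' b' - avg u a b) \<le> 2 * bmo_norm u"
proof -
  let ?c = "avg u a b"
  have ab: "a < b" using assms by auto
  have "cmod (avg u a' b' - ?c) = cmod (LINT t:{a'<..<b'}|lborel. u t - ?c) / (b' - a')"
    using assms by (simp add: avg_sub norm_divide flip: of_real_diff)
  also have "\<dots> \<le> (LINT t:{a'<..<b'}|lborel. cmod (u t - ?c)) / (b' - a')"
    using assms set_integral_norm_bound[where M=lborel and k="{a'<..<b'}" and f="\<lambda>t. u t - ?c"]
      set_integral_diff(1)[OF _ set_int_const[of a' b' ?c], of u]
    by (intro divide_right_mono) (auto simp: bmo_def)
  also have "\<dots> \<le> (LINT t:{a<..<b}|lborel. cmod (u t - ?c)) / (b' - a')"
    using assms by (intro divide_right_mono int_mono_subset) auto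
  also have "\<dots> = osc u a b * (b - a) / (b' - a')" using ab by (simp add: int_osc)
  also have "\<dots> \<le> bmo_norm u * (2 * (b' - a')) / (b' - a')"
    using assms ab osc_le_norm[OF assms(1) ab] osc_nonneg[OF ab, of u] norm_nonneg_bmo[OF assms(1)]
    by (intro divide_right_mono mult_mono) auto
  also have "\<dots> = 2 * bmo_norm u" using assms by (simp add: field_simps)
  finally show ?thesis .
qed

definition qJ :: "real \<Rightarrow> real \<Rightarrow> real" where
  "qJ CJN N = (if N = 0 then 0 else exp (1 - CJN / N))"

definition AJ :: "real \<Rightarrow> real \<Rightarrow> real \<Rightarrow> real" where
  "AJ C0 CJN N = exp 1 * (C0 + 1) / (1 - qJ CJN N)"

lemma qJ_bounds: "0 \<le> N \<Longrightarrow> N < CJN \<Longrightarrow> 0 \<le> qJ CJN N \<and> qJ CJN N < 1"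
  unfolding qJ_def by auto

lemma meas_ind:
  assumes "set_integrable lborel {a<..<b} (u :: real \<Rightarrow> complex)"
  shows "(\<lambda>t. indicator {a<..<b} t *\<^sub>R u t) \<in> borel_measurable lborel"
  using assms unfolding set_integrable_def by (rule borel_measurable_integrable)

lemma S_meas:
  assumes "set_integrable lborel {a<..<b} (u :: real \<Rightarrow> complex)"
  shows "{t \<in> {a<..<b}. lam \<le> cmod (u t - c)} \<in> sets lborel"
proof -
  note m[measurable] = meas_ind[OF assms]
  have "{t \<in> {a<..<b}. lam \<le> cmod (u t - c)} =
     {t \<in> space lborel. lam \<le> cmod (indicator {a<..<b} t *\<^sub>R u t - c)} \<inter> {a<..<b}"
    by (auto simp: indicator_def)
  also have "\<dots> \<in> sets lborel" by measurable
  finally show ?thesis .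
qed

lemma exp_int:
  assumes C0: "C0 > 0" and CJN: "CJN > 0"
    and JN: "\<forall>(u::real \<Rightarrow> complex) a b lam. bmo u \<and> a < b \<and> lam > 0 \<longrightarrow>
       measure lborel {t \<in> {a<..<b}. cmod (u t - avg u a b) \<ge> lam} / (b - a)
         \<le> C0 * exp (- CJN * lam / bmo_norm u)"
    and u: "bmo u" and N: "bmo_norm u < CJN" and ab: "a < b"
  shows "(\<integral>\<^sup>+ t. ennreal (exp (cmod (u t - avg u a b)) * indicator {a<..<b} t) \<partial>lborel)
     \<le> ennreal (AJ C0 CJN (bmo_norm u) * (b - a))"
proof -
  define g where "g t = cmod (u t - avg u a b)" for t
  define S where "S n = {t \<in> {a<..<b}. real n \<le> g t}" for n :: nat
  define q where "q = qJ CJN (bmo_norm u)"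
  define y where "y n = exp 1 * (C0 + 1) * (b - a) * q ^ n" for n :: nat
  have N0: "bmo_norm u \<ge> 0" by (rule norm_nonneg_bmo[OF u])
  have q01: "0 \<le> q" "q < 1" using qJ_bounds[OF N0 N] by (auto simp: q_def)
  have iu: "set_integrable lborel {a<..<b} u" using u ab by (simp add: bmo_def)
  have Smeas: "S n \<in> sets lborel" for n unfolding S_def g_def by (rule S_meas[OF iu])
  have Ssub: "S n \<subseteq> {a<..<b}" for n unfolding S_def by auto
  have Sfin: "emeasure lborel (S n) \<noteq> top" for n
  proof -
    have "emeasure lborel (S n) \<le> emeasure lborel {a<..<b}" by (rule emeasure_mono[OF Ssub]) simp
    also have "\<dots> = ennreal (b - a)" using ab by simp
    finally show ?thesis by (rule neq_top_trans[rotated]) simp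
  qed
  have Smeasure: "measure lborel (S n) \<le> b - a" for n
  proof -
    have "measure lborel (S n) \<le> measure lborel {a<..<b}"
      by (rule measure_mono_fmeasurable[OF Ssub Smeas]) (use ab in \<open>simp add: fmeasurable_def\<close>)
    then show ?thesis using ab by simp
  qed
  have pw: "ennreal (exp (g t) * indicator {a<..<b} t)
      \<le> (\<Sum>n. ennreal (exp 1 * exp (real n)) * indicator (S n) t)" for t
  proof (cases "t \<in> {a<..<b}")
    case False then show ?thesis by simp
  next
    case True
    define m where "m = nat \<lfloor>g t\<rfloor>"
    have g0: "g t \<ge> 0" unfolding g_def by simp
    have "real m \<le> g t" "g t \<le> real m + 1" unfolding m_def using g0
      by (simp_all add: of_nat_nat)
    then have tS: "t \<in> S m" and le: "exp (g t) \<le> exp 1 * exp (real m)"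
      using True by (auto simp: S_def mult_exp_exp add.commute)
    have "ennreal (exp (g t) * indicator {a<..<b} t) \<le> ennreal (exp 1 * exp (real m)) * indicator (S m) t"
      using True tS le by simp
    also have "\<dots> \<le> (\<Sum>n. ennreal (exp 1 * exp (real n)) * indicator (S n) t)"
    proof -
      define F where "F = (\<lambda>n. ennreal (exp 1 * exp (real n)) * indicator (S n) t)"
      have "(\<Sum>n\<in>{m}. F n) \<le> suminf F" by (rule sum_le_suminf) auto
      then have "F m \<le> suminf F" by (simp del: F_def)
      then show ?thesis by (simp only: F_def)
    qed
    finally show ?thesis .
  qed
  have termb: "ennreal (exp 1 * exp (real n)) * emeasure lborel (S n) \<le> ennreal (y n)" for n
  proof -
    have em: "emeasure lborel (S n) = ennreal (measure lborel (S n))"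
      using Sfin by (rule emeasure_eq_ennreal_measure)
    have "exp 1 * exp (real n) * measure lborel (S n) \<le> y n"
    proof (cases "n = 0")
      case True
      have "exp 1 * measure lborel (S n) \<le> exp 1 * ((C0 + 1) * (b - a))"
      proof -
        have "0 \<le> C0 * (b - a)" using C0 ab by simp
        then have "measure lborel (S n) \<le> (C0 + 1) * (b - a)"
          using Smeasure[of n] by (simp add: distrib_right)
        then show ?thesis by simp
      qed
      then show ?thesis using True by (simp add: y_def)
    next
      case False
      show ?thesis
      proof (cases "bmo_norm u = 0")
        case True
        have "(LINT t:{a<..<b}|lborel. g t) = 0"
          using int_osc[OF ab, of u] osc_le_norm[OF u ab] osc_nonneg[OF ab, of u] True
          by (simp add: g_def)
        then have "AE t in lborel. indicator {a<..<b} t *\<^sub>R g t = 0"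
          unfolding set_lebesgue_integral_def
          using set_int_cmod[OF u ab, of "avg u a b"]
          by (subst integral_nonneg_eq_0_iff_AE[symmetric])
             (auto simp: set_integrable_def g_def)
        then have "AE t in lborel. \<not> t \<in> S n"
          by eventually_elim (use False in \<open>auto simp: S_def indicator_def\<close>)
        then have "emeasure lborel {t \<in> space lborel. t \<in> S n} = 0" by (rule emeasure_eq_0_AE)
        then have "measure lborel (S n) = 0" by (simp add: measure_def)
        then show ?thesis using q01 C0 ab by (simp add: y_def)
      next
        case Nn: False
        then have Np: "bmo_norm u > 0" using N0 by simp
        have "measure lborel (S n) / (b - a) \<le> C0 * exp (- CJN * real n / bmo_norm u)"
          using JN[rule_format, of u a b "real n"] u ab False by (simp add: S_def g_def)
        then have "measure lborel (S n) \<le> (b - a) * (C0 * exp (- CJN * real n / bmo_norm u))"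
          using ab by (simp add: field_simps)
        then have "exp 1 * exp (real n) * measure lborel (S n)
           \<le> exp 1 * exp (real n) * ((b - a) * (C0 * exp (- CJN * real n / bmo_norm u)))"
          by (intro mult_left_mono) auto
        also have "\<dots> = exp 1 * (b - a) * C0 * q ^ n"
        proof -
          have "q ^ n = exp (real n * (1 - CJN / bmo_norm u))"
            using Nn by (simp add: q_def qJ_def exp_of_nat_mult)
          also have "\<dots> = exp (real n) * exp (- CJN * real n / bmo_norm u)"
            by (simp add: algebra_simps flip: exp_add)
          finally show ?thesis by simp
        qed
        also have "\<dots> \<le> y n" unfolding y_def using ab q01 C0
          by (intro mult_right_mono mult_left_mono) auto
        finally show ?thesis .
      qed
    qed
    then show ?thesis using em
      by (simp add: ennreal_leI flip: ennreal_mult)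
  qed
  have "(\<integral>\<^sup>+ t. ennreal (exp (cmod (u t - avg u a b)) * indicator {a<..<b} t) \<partial>lborel)
      \<le> (\<integral>\<^sup>+ t. (\<Sum>n. ennreal (exp 1 * exp (real n)) * indicator (S n) t) \<partial>lborel)"
    using pw by (intro nn_integral_mono) (simp add: g_def)
  also have "\<dots> = (\<Sum>n. \<integral>\<^sup>+ t. ennreal (exp 1 * exp (real n)) * indicator (S n) t \<partial>lborel)"
  proof (intro nn_integral_suminf)
    fix n
    have [measurable]: "S n \<in> sets borel" using Smeas[of n] by simp
    show "(\<lambda>t. ennreal (exp 1 * exp (real n)) * indicator (S n) t) \<in> borel_measurable lborel"
      by measurable
  qed
  also have "\<dots> = (\<Sum>n. ennreal (exp 1 * exp (real n)) * emeasure lborel (S n))"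
    using Smeas by (simp add: nn_integral_cmult_indicator)
  also have "\<dots> \<le> (\<Sum>n. ennreal (y n))"
    using termb by (intro suminf_le) auto
  also have "\<dots> = ennreal (\<Sum>n. y n)"
  proof -
    have "summable y" unfolding y_def using q01 by (intro summable_mult summable_geometric) auto
    then show ?thesis using q01 C0 ab by (intro suminf_ennreal2) (auto simp: y_def)
  qed
  also have "(\<Sum>n. y n) = AJ C0 CJN (bmo_norm u) * (b - a)"
  proof -
    have "(\<Sum>n. y n) = exp 1 * (C0 + 1) * (b - a) * (\<Sum>n. q ^ n)"
      unfolding y_def using q01 by (intro suminf_mult summable_geometric) auto
    also have "\<dots> = exp 1 * (C0 + 1) * (b - a) * (1 / (1 - q))"
      using q01 by (subst suminf_geometric) auto
    finally show ?thesis by (simp add: AJ_def q_def)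
  qed
  finally show ?thesis .
qed

lemma meas_exp:
  assumes "bmo u" "a < b"
  shows "(\<lambda>t. ennreal (exp (cmod (u t - c)) * indicator {a<..<b} t)) \<in> borel_measurable lborel"
proof -
  have iu: "set_integrable lborel {a<..<b} u" using assms by (simp add: bmo_def)
  note m[measurable] = meas_ind[OF iu]
  have "(\<lambda>t. ennreal (exp (cmod (indicator {a<..<b} t *\<^sub>R u t - c)) * indicator {a<..<b} t)) \<in> borel_measurable lborel"
    by measurable
  also have "(\<lambda>t. ennreal (exp (cmod (indicator {a<..<b} t *\<^sub>R u t - c)) * indicator {a<..<b} t))
     = (\<lambda>t. ennreal (exp (cmod (u t - c)) * indicator {a<..<b} t))"
    by (auto simp: indicator_def fun_eq_iff)
  finally show ?thesis .
qed

definition Tk :: "real \<Rightarrow> nat \<Rightarrow> real" where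
  "Tk N k = exp (1 - 2 ^ k / 2) * exp (2 * real k * N) * 2 ^ k"

lemma Tk_nonneg: "Tk N k \<ge> 0" unfolding Tk_def by simp

lemma Tk_step: "Tk N (Suc k) = (2 * exp (2 * N - 2 ^ k / 2)) * Tk N k"
proof -
  have e: "exp (1 - 2 ^ Suc k / 2) * exp (2 * real (Suc k) * N)
      = exp (1 - 2 ^ k / 2) * exp (2 * real k * N) * exp (2 * N - 2 ^ k / 2)"
  proof -
    have "(1 - 2 ^ Suc k / 2) + 2 * real (Suc k) * N = ((1 - 2 ^ k / 2) + 2 * real k * N) + (2 * N - 2 ^ k / 2)"
      by (simp add: algebra_simps)
    then have "exp ((1 - 2 ^ Suc k / 2) + 2 * real (Suc k) * N) = exp (((1 - 2 ^ k / 2) + 2 * real k * N) + (2 * N - 2 ^ k / 2))"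
      by (rule arg_cong)
    then show ?thesis by (simp only: exp_add)
  qed
  show ?thesis unfolding Tk_def e
    by (simp add: algebra_simps)
qed

lemma Tk_summable: "summable (Tk N)"
proof (rule summable_ratio_test[of "1/2" "nat \<lceil>4 * \<bar>N\<bar> + 4\<rceil>"])
  fix k assume k: "k \<ge> nat \<lceil>4 * \<bar>N\<bar> + 4\<rceil>"
  have "real k < real ((2::nat) ^ k)" using less_exp[of k] by (simp only: of_nat_less_iff)
  then have "real k \<le> 2 ^ k" by simp
  moreover have "4 * \<bar>N\<bar> + 4 \<le> real k" using k by linarith
  ultimately have "2 * N - 2 ^ k / 2 \<le> -2" by linarith
  then have "exp (2 * N - 2 ^ k / 2) \<le> exp (-2)" by simp
  also have "exp (-2::real) \<le> 1/4"
  proof -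
    have "(2::real) \<le> exp 1" using exp_ge_add_one_self[of 1] by simp
    then have "4 \<le> exp (1::real) * exp 1" using mult_mono[of 2 "exp 1" 2 "exp (1::real)"] by simp
    then have "4 \<le> exp (2::real)" by (simp flip: exp_add)
    then show ?thesis by (simp add: exp_minus field_simps)
  qed
  finally have "2 * exp (2 * N - 2 ^ k / 2) \<le> 1/2" by simp
  then have "(2 * exp (2 * N - 2 ^ k / 2)) * Tk N k \<le> 1/2 * Tk N k"
    using Tk_nonneg[of N k] by (rule mult_right_mono)
  then show "norm (Tk N (Suc k)) \<le> 1/2 * norm (Tk N k)"
    using Tk_nonneg[of N k] Tk_nonneg[of N "Suc k"] by (simp only: Tk_step real_norm_def abs_of_nonneg)
qed simp

lemma avg_chain:
  assumes u: "bmo u" and y: "y > 0"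
  shows "cmod (avg u (x - 2 ^ k * y) (x + 2 ^ k * y) - avg u (x - y) (x + y)) \<le> 2 * real k * bmo_norm u"
proof (induction k)
  case 0 then show ?case by simp
next
  case (Suc k)
  let ?A = "\<lambda>k. avg u (x - 2 ^ k * y) (x + 2 ^ k * y)"
  have p: "(0::real) < 2 ^ k * y" using y by simp
  have "cmod (?A k - ?A (Suc k)) \<le> 2 * bmo_norm u"
    by (rule avg_diff[OF u]) (use p in \<open>auto simp: algebra_simps\<close>)
  then have "cmod (?A (Suc k) - ?A k) \<le> 2 * bmo_norm u" by (simp add: norm_minus_commute)
  moreover have "cmod (?A (Suc k) - ?A 0) \<le> cmod (?A (Suc k) - ?A k) + cmod (?A k - ?A 0)"
    using norm_triangle_ineq[of "?A (Suc k) - ?A k" "?A k - ?A 0"] by simp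
  ultimately show ?case using Suc by (simp add: algebra_simps)
qed

theorem proposition2p5:
  fixes C0 CJN :: real
  assumes "C0 > 0" and "CJN > 0"
    and JN: "\<forall>(u::real \<Rightarrow> complex) a b lam. bmo u \<and> a < b \<and> lam > 0 \<longrightarrow>
       measure lborel {t \<in> {a<..<b}. cmod (u t - avg u a b) \<ge> lam} / (b - a)
         \<le> C0 * exp (- CJN * lam / bmo_norm u)"
  shows "\<exists>K :: real \<Rightarrow> real \<Rightarrow> real.
    \<forall>(u::real \<Rightarrow> complex) (\<phi>::real \<Rightarrow> complex) C.
      bmo u \<and> C > 0 \<and> (\<forall>x. cmod (\<phi> x) \<le> C * exp (- \<bar>x\<bar>)) \<and> bmo_norm u < CJN \<longrightarrow>
      (\<forall>x y. y > 0 \<longrightarrow>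
        (\<integral>\<^sup>+ t. ennreal (cmod (\<phi> ((x - t) / y)) / y * exp (cmod (u t - avg u (x - y) (x + y)))) \<partial>lborel)
          \<le> ennreal (K (bmo_norm u) C))"
proof (intro exI allI impI)
  fix u :: "real \<Rightarrow> complex" and \<phi> :: "real \<Rightarrow> complex" and C x y :: real
  assume H: "bmo u \<and> C > 0 \<and> (\<forall>x. cmod (\<phi> x) \<le> C * exp (- \<bar>x\<bar>)) \<and> bmo_norm u < CJN"
  assume y: "y > 0"
  have u: "bmo u" and C: "C > 0" and phi: "\<And>x. cmod (\<phi> x) \<le> C * exp (- \<bar>x\<bar>)"
    and NC: "bmo_norm u < CJN" using H by auto
  define N where "N = bmo_norm u"
  have N0: "N \<ge> 0" unfolding N_def by (rule norm_nonneg_bmo[OF u])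
  define A where "A = AJ C0 CJN N"
  have A0: "A \<ge> 0" using qJ_bounds[OF N0 NC[folded N_def]] assms
    by (simp add: A_def AJ_def)
  define r where "r k = 2 ^ k * y" for k :: nat
  have r0: "r k > 0" for k using y by (simp add: r_def)
  define av where "av k = avg u (x - r k) (x + r k)" for k
  define I where "I k = {x - r k <..< x + r k}" for k
  define c where "c k = C / y * (exp (1 - 2 ^ k / 2) * exp (2 * real k * N))" for k :: nat
  have c0: "c k \<ge> 0" for k using C y by (simp add: c_def)
  define F where "F k t = ennreal (c k) * ennreal (exp (cmod (u t - av k)) * indicator (I k) t)" for k t
  have pw: "ennreal (cmod (\<phi> ((x - t) / y)) / y * exp (cmod (u t - avg u (x - y) (x + y))))
      \<le> (\<Sum>k. F k t)" for t
  proof -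
    define P where "P k = (\<bar>x - t\<bar> < r k)" for k
    have "\<exists>k. \<bar>x - t\<bar> / y < 2 ^ k" using real_arch_pow[of 2 "\<bar>x - t\<bar> / y"] by auto
    then have ex: "\<exists>k. P k" using y by (auto simp: P_def r_def field_simps)
    define k where "k = (LEAST k. P k)"
    have Pk: "P k" unfolding k_def by (rule LeastI_ex[OF ex])
    have expb: "- (\<bar>x - t\<bar> / y) \<le> 1 - 2 ^ k / 2"
    proof (cases k)
      case 0
      have "0 \<le> \<bar>x - t\<bar> / y" using y by simp
      then show ?thesis using 0 by (simp only: power_0)
    next
      case (Suc j)
      then have "\<not> P j" using not_less_Least[of j P] by (simp add: k_def)
      then have "2 ^ j \<le> \<bar>x - t\<bar> / y" using y by (simp add: P_def r_def field_simps)
      then show ?thesis using Suc by simp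
    qed
    have tI: "t \<in> I k" using Pk by (auto simp: P_def I_def abs_less_iff)
    have d: "cmod (av k - avg u (x - y) (x + y)) \<le> 2 * real k * N"
      using avg_chain[OF u y, of x k] by (simp add: av_def r_def N_def)
    have "cmod (u t - avg u (x - y) (x + y)) \<le> cmod (u t - av k) + cmod (av k - avg u (x - y) (x + y))"
      using norm_triangle_ineq[of "u t - av k" "av k - avg u (x - y) (x + y)"] by simp
    then have g: "cmod (u t - avg u (x - y) (x + y)) \<le> cmod (u t - av k) + 2 * real k * N"
      using d by simp
    have ph: "cmod (\<phi> ((x - t) / y)) \<le> C * exp (1 - 2 ^ k / 2)"
    proof -
      have "cmod (\<phi> ((x - t) / y)) \<le> C * exp (- \<bar>(x - t) / y\<bar>)" by (rule phi)
      also have "\<bar>(x - t) / y\<bar> = \<bar>x - t\<bar> / y" using y by simp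
      also have "C * exp (- (\<bar>x - t\<bar> / y)) \<le> C * exp (1 - 2 ^ k / 2)"
        using C expb by simp
      finally show ?thesis .
    qed
    have "cmod (\<phi> ((x - t) / y)) / y * exp (cmod (u t - avg u (x - y) (x + y)))
        \<le> C * exp (1 - 2 ^ k / 2) / y * exp (cmod (u t - av k) + 2 * real k * N)"
      using ph g y C by (intro mult_mono divide_right_mono) auto
    also have "\<dots> = c k * (exp (cmod (u t - av k)) * indicator (I k) t)"
      using tI by (simp add: c_def exp_add algebra_simps)
    finally have "ennreal (cmod (\<phi> ((x - t) / y)) / y * exp (cmod (u t - avg u (x - y) (x + y)))) \<le> F k t"
      using c0[of k] by (simp add: F_def ennreal_leI flip: ennreal_mult)
    also have "F k t \<le> (\<Sum>k. F k t)"
    proof -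
      define G where "G = (\<lambda>k. F k t)"
      have "(\<Sum>n\<in>{k}. G n) \<le> suminf G" by (rule sum_le_suminf) auto
      then have "G k \<le> suminf G" by (simp del: G_def)
      then show ?thesis by (simp only: G_def)
    qed
    finally show ?thesis .
  qed
  have mF: "F k \<in> borel_measurable lborel" for k
  proof -
    have "(\<lambda>t. ennreal (exp (cmod (u t - av k)) * indicator {x - r k<..<x + r k} t)) \<in> borel_measurable lborel"
      by (rule meas_exp[OF u]) (use r0[of k] in simp)
    then show ?thesis unfolding F_def I_def by measurable
  qed
  have intF: "integral\<^sup>N lborel (F k) \<le> ennreal (2 * A * C * Tk N k)" for k
  proof -
    have "integral\<^sup>N lborel (F k) = ennreal (c k) * (\<integral>\<^sup>+ t. ennreal (exp (cmod (u t - av k)) * indicator (I k) t) \<partial>lborel)"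
      unfolding F_def
    proof (rule nn_integral_cmult)
      show "(\<lambda>t. ennreal (exp (cmod (u t - av k)) * indicator (I k) t)) \<in> borel_measurable lborel"
        unfolding I_def by (rule meas_exp[OF u]) (use r0[of k] in simp)
    qed
    also have "\<dots> \<le> ennreal (c k) * ennreal (A * ((x + r k) - (x - r k)))"
      unfolding I_def av_def A_def N_def
      by (intro mult_left_mono exp_int[OF assms u NC]) (use r0[of k] in auto)
    also have "\<dots> = ennreal (c k * (A * ((x + r k) - (x - r k))))"
      using c0[of k] A0 r0[of k] by (simp add: ennreal_mult)
    also have "c k * (A * ((x + r k) - (x - r k))) = 2 * A * C * Tk N k"
      using y by (simp add: c_def r_def Tk_def field_simps)
    finally show ?thesis .
  qed
  have "(\<integral>\<^sup>+ t. ennreal (cmod (\<phi> ((x - t) / y)) / y * exp (cmod (u t - avg u (x - y) (x + y)))) \<partial>lborel)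
      \<le> (\<integral>\<^sup>+ t. (\<Sum>k. F k t) \<partial>lborel)"
    using pw by (intro nn_integral_mono) simp
  also have "\<dots> = (\<Sum>k. integral\<^sup>N lborel (F k))"
    using mF by (rule nn_integral_suminf)
  also have "\<dots> \<le> (\<Sum>k. ennreal (2 * A * C * Tk N k))"
    using intF by (intro suminf_le) auto
  also have "\<dots> = ennreal (\<Sum>k. 2 * A * C * Tk N k)"
    using A0 C Tk_nonneg[of N] by (intro suminf_ennreal2 summable_mult Tk_summable) auto
  also have "(\<Sum>k. 2 * A * C * Tk N k) = 2 * AJ C0 CJN (bmo_norm u) * C * suminf (Tk (bmo_norm u))"
    using Tk_summable[of N] by (simp add: suminf_mult A_def N_def)
  finally show "(\<integral>\<^sup>+ t. ennreal (cmod (\<phi> ((x - t) / y)) / y * exp (cmod (u t - avg u (x - y) (x + y)))) \<partial>lborel)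
      \<le> ennreal ((\<lambda>N C. 2 * AJ C0 CJN N * C * suminf (Tk N)) (bmo_norm u) C)"
    by simp
qed

end
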